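(* Let $S$ be a semigroup. If $\ell^{1}(S)^{**}$ is pseudo-contractible, then $S$ is amenable.
   Context: $\ell^1(S)$ is the semigroup algebra of $S$ and $\ell^1(S)^{**}$ carries the first Arens product. A Banach algebra $A$ is pseudo-contractible if there is a (not necessarily bounded) net $(m_\alpha)$ in $A\otimes_p A$ such that $a\cdot m_\alpha=m_\alpha\cdot a$ and $\pi_A(m_\alpha)a\to a$ for all $a\in A$, where $\pi_A(a\otimes b)=ab$ and the module actions are $a\cdot(b\otimes c)=ab\otimes c$, $(b\otimes c)\cdot a=b\otimes ca$. With $\phi$ the augmentation character on $\ell^1(S)$, $S$ is left (right) amenable if there is $m\in\ell^1(S)^{**}$ with $\delta_s\cdot m=m$ (resp. $m\cdot\delta_s=m$) for all $s\in S$ and $\|m\|=m(\phi)=1$; $S$ is amenable if it is both left and right amenable. *)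

theory Defs
  imports Complex_Main
begin

text \<open>Concrete model of l^1(S)** for a semigroup S (type 's), scalars complex.
  l^infinity(S) = l^1(S)* is the set of bounded functions S -> complex.
  An element of l^1(S)** is a bounded linear functional on l^infinity(S),
  represented extensionally (value 0 outside l^infinity(S)).\<close>

type_synonym 's linf = "'s \<Rightarrow> complex"
type_synonym 's bid = "'s linf \<Rightarrow> complex"

definition linf :: "'s linf set" where
  "linf = {f. \<exists>K. \<forall>s. cmod (f s) \<le> K}"

definition supnorm :: "'s linf \<Rightarrow> real" where
  "supnorm f = (SUP s. cmod (f s))"

definition bidual :: "'s bid set" where
  "bidual = {m.
     (\<forall>f\<in>linf. \<forall>g\<in>linf. m (\<lambda>s. f s + g s) = m f + m g) \<and>
     (\<forall>c. \<forall>f\<in>linf. m (\<lambda>s. c * f s) = c * m f) \<and>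
     (\<exists>K. \<forall>f\<in>linf. cmod (m f) \<le> K * supnorm f) \<and>
     (\<forall>f. f \<notin> linf \<longrightarrow> m f = 0)}"

definition bnorm :: "'s bid \<Rightarrow> real" where
  "bnorm m = (SUP f\<in>{f\<in>linf. supnorm f \<le> 1}. cmod (m f))"

definition badd :: "'s bid \<Rightarrow> 's bid \<Rightarrow> 's bid" where
  "badd x y = (\<lambda>f. x f + y f)"

definition bscale :: "complex \<Rightarrow> 's bid \<Rightarrow> 's bid" where
  "bscale c x = (\<lambda>f. c * x f)"

text \<open>First Arens product:  (f.a)(b) = f(ab), (n.f)(a) = n(f.a), (m n)(f) = m(n.f).
  For l^1(S): (f.delta_s)(t) = f(st), (n.f)(s) = n(t |-> f(st)).\<close>
definition arens :: "('s::semigroup_mult) bid \<Rightarrow> 's bid \<Rightarrow> 's bid" where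
  "arens m n = (\<lambda>f. if f \<in> linf then m (\<lambda>s. n (\<lambda>t. f (s * t))) else 0)"

text \<open>Canonical image of the point mass delta_s in l^1(S)**.\<close>
definition dhat :: "'s \<Rightarrow> 's bid" where
  "dhat s = (\<lambda>f. if f \<in> linf then f s else 0)"

text \<open>The augmentation character phi (phi(delta_s) = 1) as an element of l^infinity(S).\<close>
definition augm :: "'s linf" where
  "augm = (\<lambda>_. 1)"

text \<open>Bounded bilinear forms on l^1(S)** x l^1(S)** (the dual of the projective tensor product).\<close>
definition bbil :: "('s bid \<Rightarrow> 's bid \<Rightarrow> complex) set" where
  "bbil = {\<Phi>.
     (\<forall>x\<in>bidual. \<forall>y\<in>bidual. \<forall>z\<in>bidual.
        \<Phi> (badd x y) z = \<Phi> x z + \<Phi> y z \<and> \<Phi> z (badd x y) = \<Phi> z x + \<Phi> z y) \<and>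
     (\<forall>c. \<forall>x\<in>bidual. \<forall>y\<in>bidual.
        \<Phi> (bscale c x) y = c * \<Phi> x y \<and> \<Phi> x (bscale c y) = c * \<Phi> x y) \<and>
     (\<exists>K. \<forall>x\<in>bidual. \<forall>y\<in>bidual. cmod (\<Phi> x y) \<le> K * bnorm x * bnorm y)}"

text \<open>The projective tensor product A \<otimes>_p A for A = l^1(S)**: every element is
  a series sum_i x_i \<otimes> y_i with sum_i ||x_i|| ||y_i|| < infinity, and is identified
  (faithfully, by Hahn-Banach) with the functional Phi |-> sum_i Phi(x_i,y_i) on bounded
  bilinear forms.\<close>
definition ptensor :: "(('s bid \<Rightarrow> 's bid \<Rightarrow> complex) \<Rightarrow> complex) set" where
  "ptensor = {u. \<exists>x y. (\<forall>i::nat. x i \<in> bidual \<and> y i \<in> bidual) \<and>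
      summable (\<lambda>i. bnorm (x i) * bnorm (y i)) \<and>
      u = (\<lambda>\<Phi>. if \<Phi> \<in> bbil then (\<Sum>i. \<Phi> (x i) (y i)) else 0)}"

text \<open>Module actions a.(b \<otimes> c) = ab \<otimes> c and (b \<otimes> c).a = b \<otimes> ca.\<close>
definition tlmod :: "('s::semigroup_mult) bid \<Rightarrow> (('s bid \<Rightarrow> 's bid \<Rightarrow> complex) \<Rightarrow> complex)
    \<Rightarrow> (('s bid \<Rightarrow> 's bid \<Rightarrow> complex) \<Rightarrow> complex)" where
  "tlmod a u = (\<lambda>\<Phi>. if \<Phi> \<in> bbil then u (\<lambda>x y. \<Phi> (arens a x) y) else 0)"

definition trmod :: "(('s::semigroup_mult bid \<Rightarrow> 's bid \<Rightarrow> complex) \<Rightarrow> complex) \<Rightarrow> 's bid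
    \<Rightarrow> (('s bid \<Rightarrow> 's bid \<Rightarrow> complex) \<Rightarrow> complex)" where
  "trmod u a = (\<lambda>\<Phi>. if \<Phi> \<in> bbil then u (\<lambda>x y. \<Phi> x (arens y a)) else 0)"

text \<open>The multiplication map pi(b \<otimes> c) = bc (Arens product).\<close>
definition tpi :: "(('s::semigroup_mult bid \<Rightarrow> 's bid \<Rightarrow> complex) \<Rightarrow> complex) \<Rightarrow> 's bid" where
  "tpi u = (\<lambda>f. if f \<in> linf then u (\<lambda>x y. arens x y f) else 0)"

text \<open>Pseudo-contractibility of l^1(S)** with the first Arens product.  A net is
  rendered as a proper filter (the eventuality filter of the net).\<close>
definition bidual_pseudo_contractible :: "('s::semigroup_mult) itself \<Rightarrow> bool" where
  "bidual_pseudo_contractible _ \<longleftrightarrow>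
    (\<exists>F :: ((('s bid \<Rightarrow> 's bid \<Rightarrow> complex) \<Rightarrow> complex)) filter.
       F \<noteq> bot \<and>
       (\<forall>\<^sub>F m in F. m \<in> ptensor \<and> (\<forall>a\<in>bidual. tlmod a m = trmod m a)) \<and>
       (\<forall>a\<in>bidual. ((\<lambda>m. bnorm (\<lambda>f. arens (tpi m) a f - a f)) \<longlongrightarrow> 0) F))"

definition left_amenable :: "('s::semigroup_mult) itself \<Rightarrow> bool" where
  "left_amenable _ \<longleftrightarrow> (\<exists>m::'s bid. m \<in> bidual \<and> (\<forall>s. arens (dhat s) m = m) \<and>
      bnorm m = 1 \<and> m augm = 1)"

definition right_amenable :: "('s::semigroup_mult) itself \<Rightarrow> bool" where
  "right_amenable _ \<longleftrightarrow> (\<exists>m::'s bid. m \<in> bidual \<and> (\<forall>s. arens m (dhat s) = m) \<and>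
      bnorm m = 1 \<and> m augm = 1)"

definition amenable_sg :: "('s::semigroup_mult) itself \<Rightarrow> bool" where
  "amenable_sg T \<longleftrightarrow> left_amenable T \<and> right_amenable T"

end

theory Submission
  imports Defs
begin

lemma linfI: "(\<And>s. cmod (f s) \<le> C) \<Longrightarrow> f \<in> linf"
  unfolding linf_def by blast

lemma linf_bdd: "f \<in> linf \<Longrightarrow> bdd_above (range (\<lambda>s. cmod (f s)))"
  unfolding linf_def bdd_above_def by auto

lemma linf_le: "f \<in> linf \<Longrightarrow> cmod (f s) \<le> supnorm f"
  unfolding supnorm_def by (rule cSUP_upper[OF _ linf_bdd]) auto

lemma supnorm_nonneg: "f \<in> linf \<Longrightarrow> 0 \<le> supnorm f"
  using linf_le[of f undefined] norm_ge_zero order_trans by blast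

lemma supnorm_le: "(\<And>s. cmod (f s) \<le> C) \<Longrightarrow> supnorm f \<le> C"
  unfolding supnorm_def by (rule cSUP_least) auto

lemma supnorm_const: "supnorm (\<lambda>s. c) = cmod c"
  unfolding supnorm_def by simp

lemma augm_linf: "augm \<in> linf" unfolding augm_def by (rule linfI[of _ 1]) simp

lemma supnorm_augm: "supnorm augm = 1" unfolding augm_def supnorm_const by simp

lemma linf_comp: "f \<in> linf \<Longrightarrow> (\<lambda>t. f (\<sigma> t)) \<in> linf"
  by (rule linfI[of _ "supnorm f"]) (rule linf_le)

lemma supnorm_comp: "f \<in> linf \<Longrightarrow> supnorm (\<lambda>t. f (\<sigma> t)) \<le> supnorm f"
  by (rule supnorm_le) (rule linf_le)

lemma linf_add: "f \<in> linf \<Longrightarrow> g \<in> linf \<Longrightarrow> (\<lambda>s. f s + g s) \<in> linf"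
  apply (rule linfI[of _ "supnorm f + supnorm g"])
  by (meson add_mono linf_le norm_triangle_ineq order_trans)

lemma linf_scale: "f \<in> linf \<Longrightarrow> (\<lambda>s. c * f s) \<in> linf"
  apply (rule linfI[of _ "cmod c * supnorm f"])
  by (simp add: linf_le mult_left_mono norm_mult)

lemma linf_zero: "(\<lambda>s. 0) \<in> linf" by (rule linfI[of _ 0]) simp

lemma supnorm_zero_imp: "f \<in> linf \<Longrightarrow> supnorm f = 0 \<Longrightarrow> f = (\<lambda>s. 0)"
  using linf_le[of f] by (metis norm_le_zero_iff ext)

lemma bidual_add: "m \<in> bidual \<Longrightarrow> f \<in> linf \<Longrightarrow> g \<in> linf \<Longrightarrow> m (\<lambda>s. f s + g s) = m f + m g"
  unfolding bidual_def by blast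
lemma bidual_scale: "m \<in> bidual \<Longrightarrow> f \<in> linf \<Longrightarrow> m (\<lambda>s. c * f s) = c * m f"
  unfolding bidual_def by blast
lemma bidual_out: "m \<in> bidual \<Longrightarrow> f \<notin> linf \<Longrightarrow> m f = 0"
  unfolding bidual_def by blast
lemma bidual_bound: "(m::'s bid) \<in> bidual \<Longrightarrow> \<exists>K\<ge>0. \<forall>f\<in>linf. cmod (m f) \<le> K * supnorm f"
proof -
  assume "m \<in> bidual"
  then obtain K where K: "\<forall>f\<in>linf. cmod (m f) \<le> K * supnorm f" unfolding bidual_def by blast
  show ?thesis
  proof (intro exI[of _ "max K 0"] conjI ballI)
    fix f :: "'s linf" assume f: "f \<in> linf"
    have "K * supnorm f \<le> max K 0 * supnorm f"
      by (rule mult_right_mono) (auto simp: supnorm_nonneg f)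
    then show "cmod (m f) \<le> max K 0 * supnorm f" using K f by auto
  qed simp
qed
lemma bidual_zero: "m \<in> bidual \<Longrightarrow> m (\<lambda>s. 0) = 0"
  using bidual_scale[of m "\<lambda>s. 0" 0] linf_zero by simp

lemma bnorm_ge:
  fixes m :: "'s bid" and f :: "'s linf"
  assumes K: "\<forall>f\<in>linf. cmod (m f) \<le> K * supnorm f" and f: "f \<in> linf" "supnorm f \<le> 1"
  shows "cmod (m f) \<le> bnorm m"
  unfolding bnorm_def
proof (rule cSUP_upper)
  show "f \<in> {f \<in> (linf::'s linf set). supnorm f \<le> 1}" using f by simp
  show "bdd_above ((\<lambda>f. cmod (m f)) ` {f \<in> (linf::'s linf set). supnorm f \<le> 1})"
  proof (rule bdd_aboveI2)
    fix g assume g: "g \<in> {f \<in> (linf::'s linf set). supnorm f \<le> 1}"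
    have "cmod (m g) \<le> K * supnorm g" using K g by auto
    also have "\<dots> \<le> max K 0" using g supnorm_nonneg[of g]
      by (cases "K \<ge> 0") (auto intro: mult_left_le mult_nonpos_nonneg order_trans)
    finally show "cmod (m g) \<le> max K 0" .
  qed
qed

lemma bnorm_nonneg: "\<forall>f::'s linf\<in>linf. cmod (m f) \<le> K * supnorm f \<Longrightarrow> m (\<lambda>s. 0) = 0 \<Longrightarrow> 0 \<le> bnorm m"
proof -
  assume K: "\<forall>f::'s linf\<in>linf. cmod (m f) \<le> K * supnorm f" and z: "m (\<lambda>s. 0) = 0"
  have "supnorm (\<lambda>s::'s. 0::complex) \<le> 1" by (rule supnorm_le) simp
  then show ?thesis using bnorm_ge[OF K linf_zero] z by simp
qed

lemma bnorm_bound: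
  assumes m: "m \<in> bidual" and f: "f \<in> linf"
  shows "cmod (m f) \<le> bnorm m * supnorm f"
proof -
  obtain K where K: "\<forall>f\<in>linf. cmod (m f) \<le> K * supnorm f" using bidual_bound[OF m] by blast
  have bn: "0 \<le> bnorm m" using bnorm_nonneg[OF K] bidual_zero[OF m] by simp
  show ?thesis
  proof (cases "supnorm f = 0")
    case True
    then have "f = (\<lambda>s. 0)" using supnorm_zero_imp f by blast
    then show ?thesis using bidual_zero[OF m] True by simp
  next
    case False
    define N where "N = supnorm f"
    have N: "N > 0" using False supnorm_nonneg[OF f] N_def by simp
    define g where "g = (\<lambda>s. complex_of_real (1/N) * f s)"
    have g: "g \<in> linf" unfolding g_def by (rule linf_scale[OF f])
    have "supnorm g \<le> 1" unfolding g_def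
      apply (rule supnorm_le)
      using linf_le[OF f] N N_def by (simp add: norm_mult norm_divide divide_le_eq_1 field_simps)
    then have "cmod (m g) \<le> bnorm m" using bnorm_ge[OF K g] by simp
    moreover have "m g = complex_of_real (1/N) * m f" unfolding g_def using bidual_scale[OF m f] .
    ultimately have "cmod (m f) / N \<le> bnorm m" using N by (simp add: norm_divide)
    then show ?thesis using N N_def by (simp add: field_simps mult.commute)
  qed
qed

lemma bnorm_nonneg': "m \<in> bidual \<Longrightarrow> 0 \<le> bnorm m"
  using bidual_bound[of m] bnorm_nonneg bidual_zero by blast

lemma badd_bidual: "x \<in> bidual \<Longrightarrow> y \<in> bidual \<Longrightarrow> badd x y \<in> bidual"
proof -
  assume x: "x \<in> bidual" and y: "y \<in> bidual"
  obtain K1 where K1: "\<forall>f\<in>linf. cmod (x f) \<le> K1 * supnorm f" using bidual_bound[OF x] by blast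
  obtain K2 where K2: "\<forall>f\<in>linf. cmod (y f) \<le> K2 * supnorm f" using bidual_bound[OF y] by blast
  have "\<forall>f\<in>linf. cmod (x f + y f) \<le> (K1 + K2) * supnorm f"
    using K1 K2 by (metis add_mono distrib_right norm_triangle_le)
  then show ?thesis using x y unfolding badd_def bidual_def
    by (auto simp: algebra_simps intro!: exI[of _ "K1+K2"])
qed

lemma bscale_bidual: "x \<in> bidual \<Longrightarrow> bscale c x \<in> bidual"
proof -
  assume x: "x \<in> bidual"
  obtain K1 where K1: "\<forall>f\<in>linf. cmod (x f) \<le> K1 * supnorm f" using bidual_bound[OF x] by blast
  have "\<forall>f\<in>linf. cmod (c * x f) \<le> (cmod c * K1) * supnorm f"
    using K1 by (simp add: norm_mult mult.assoc mult_left_mono)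
  then show ?thesis using x unfolding bscale_def bidual_def
    by (auto simp: algebra_simps intro!: exI[of _ "cmod c * K1"])
qed

lemma dhat_bidual: "dhat s \<in> bidual"
  unfolding bidual_def dhat_def
  by (auto intro!: exI[of _ 1] simp: linf_add linf_scale linf_le)

lemma bbil_cong:
  fixes \<Phi> :: "'s bid \<Rightarrow> 's bid \<Rightarrow> complex"
  assumes "\<Phi> \<in> bbil" "\<forall>x\<in>bidual. \<forall>y\<in>bidual. \<Psi> x y = \<Phi> x y"
  shows "\<Psi> \<in> bbil"
  using assms unfolding bbil_def by (simp add: badd_bidual bscale_bidual)

lemma prod_bound:
  fixes f g :: "'s linf"
  assumes f: "f \<in> linf" and g: "g \<in> linf" and x: "x \<in> bidual" and y: "y \<in> bidual"
  shows "cmod (x f * y g) \<le> supnorm f * supnorm g * bnorm x * bnorm y"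
proof -
  have "cmod (x f * y g) \<le> (bnorm x * supnorm f) * (bnorm y * supnorm g)"
    unfolding norm_mult
    by (rule mult_mono) (auto intro: bnorm_bound x y f g mult_nonneg_nonneg bnorm_nonneg' supnorm_nonneg)
  then show ?thesis by (simp add: algebra_simps)
qed

lemma prod_bbil:
  fixes f g :: "'s linf"
  assumes f: "f \<in> linf" and g: "g \<in> linf"
  shows "(\<lambda>x y. x f * y g) \<in> bbil"
  unfolding bbil_def
proof (intro CollectI conjI ballI allI exI[of _ "supnorm f * supnorm g"])
  fix x y :: "'s bid" assume x: "x \<in> bidual" and y: "y \<in> bidual"
  have "cmod (x f * y g) \<le> (bnorm x * supnorm f) * (bnorm y * supnorm g)"
    unfolding norm_mult
    by (rule mult_mono) (auto intro: bnorm_bound x y f g mult_nonneg_nonneg bnorm_nonneg' supnorm_nonneg)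
  then show "cmod (x f * y g) \<le> supnorm f * supnorm g * bnorm x * bnorm y"
    by (simp add: algebra_simps)
qed (auto simp: badd_def bscale_def algebra_simps)

lemma arens_inner:
  fixes g :: "('s::semigroup_mult) linf"
  assumes y: "y \<in> bidual" and g: "g \<in> linf"
  shows "(\<lambda>s. y (\<lambda>t. g (s*t))) \<in> linf" "supnorm (\<lambda>s. y (\<lambda>t. g (s*t))) \<le> bnorm y * supnorm g"
proof -
  have "\<And>s. cmod (y (\<lambda>t. g (s*t))) \<le> bnorm y * supnorm g"
  proof -
    fix s
    have "cmod (y (\<lambda>t. g (s*t))) \<le> bnorm y * supnorm (\<lambda>t. g (s*t))"
      by (rule bnorm_bound[OF y linf_comp[OF g]])
    also have "\<dots> \<le> bnorm y * supnorm g"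
      by (rule mult_left_mono[OF supnorm_comp[OF g] bnorm_nonneg'[OF y]])
    finally show "cmod (y (\<lambda>t. g (s*t))) \<le> bnorm y * supnorm g" .
  qed
  then show "(\<lambda>s. y (\<lambda>t. g (s*t))) \<in> linf" "supnorm (\<lambda>s. y (\<lambda>t. g (s*t))) \<le> bnorm y * supnorm g"
    by (auto intro: linfI supnorm_le)
qed

lemma arens_bound:
  fixes g :: "('s::semigroup_mult) linf"
  assumes g: "g \<in> linf" and x: "x \<in> bidual" and y: "y \<in> bidual"
  shows "cmod (arens x y g) \<le> supnorm g * bnorm x * bnorm y"
proof -
  have "cmod (arens x y g) \<le> bnorm x * supnorm (\<lambda>s. y (\<lambda>t. g (s*t)))"
    unfolding arens_def using g by (simp add: bnorm_bound x arens_inner y)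
  also have "\<dots> \<le> bnorm x * (bnorm y * supnorm g)"
    by (rule mult_left_mono[OF arens_inner(2)[OF y g] bnorm_nonneg'[OF x]])
  finally show ?thesis by (simp add: algebra_simps)
qed

lemma arens_bbil:
  assumes g: "(g::('s::semigroup_mult) linf) \<in> linf"
  shows "(\<lambda>x y. arens x y g) \<in> bbil"
  unfolding bbil_def
proof (intro CollectI conjI ballI allI exI[of _ "supnorm g"])
  fix x y :: "'s bid" assume x: "x \<in> bidual" and y: "y \<in> bidual"
  have "cmod (arens x y g) \<le> bnorm x * supnorm (\<lambda>s. y (\<lambda>t. g (s*t)))"
    unfolding arens_def using g by (simp add: bnorm_bound x arens_inner y)
  also have "\<dots> \<le> bnorm x * (bnorm y * supnorm g)"
    by (rule mult_left_mono[OF arens_inner(2)[OF y g] bnorm_nonneg'[OF x]])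
  finally show "cmod (arens x y g) \<le> supnorm g * bnorm x * bnorm y" by (simp add: algebra_simps)
next
  fix x y z :: "'s bid" assume x: "x \<in> bidual" and y: "y \<in> bidual" and z: "z \<in> bidual"
  show "arens (badd x y) z g = arens x z g + arens y z g"
    unfolding arens_def badd_def by simp
  show "arens z (badd x y) g = arens z x g + arens z y g"
    unfolding arens_def badd_def using g
    by (simp add: bidual_add[OF z arens_inner(1)[OF x g] arens_inner(1)[OF y g]])
next
  fix c and x y :: "'s bid" assume x: "x \<in> bidual" and y: "y \<in> bidual"
  show "arens (bscale c x) y g = c * arens x y g"
    unfolding arens_def bscale_def by simp
  show "arens x (bscale c y) g = c * arens x y g"
    unfolding arens_def bscale_def using g
    by (simp add: bidual_scale[OF x arens_inner(1)[OF y g]])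
qed

lemma ptensorE:
  fixes u :: "('s bid \<Rightarrow> 's bid \<Rightarrow> complex) \<Rightarrow> complex"
  assumes "u \<in> ptensor"
  obtains x y where "\<And>i. x i \<in> bidual" "\<And>i. y i \<in> bidual"
    "summable (\<lambda>i. bnorm (x i) * bnorm (y i))"
    "u = (\<lambda>\<Phi>. if \<Phi> \<in> bbil then (\<Sum>i. \<Phi> (x i) (y i)) else 0)"
  using assms unfolding ptensor_def by blast

lemma bbil_bound:
  fixes \<Phi> :: "'s bid \<Rightarrow> 's bid \<Rightarrow> complex"
  shows "\<Phi> \<in> bbil \<Longrightarrow> \<exists>K\<ge>0. \<forall>x\<in>bidual. \<forall>y\<in>bidual. cmod (\<Phi> x y) \<le> K * bnorm x * bnorm y"
proof -
  assume "\<Phi> \<in> bbil"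
  then obtain K where K: "\<forall>x\<in>bidual. \<forall>y\<in>bidual. cmod (\<Phi> x y) \<le> K * bnorm x * bnorm y"
    unfolding bbil_def by blast
  show ?thesis
  proof (intro exI[of _ "max K 0"] conjI ballI)
    fix x y :: "'s bid" assume x: "x \<in> bidual" and y: "y \<in> bidual"
    have "K * bnorm x * bnorm y \<le> max K 0 * bnorm x * bnorm y"
      using bnorm_nonneg'[OF x] bnorm_nonneg'[OF y]
      by (intro mult_right_mono) auto
    then show "cmod (\<Phi> x y) \<le> max K 0 * bnorm x * bnorm y" using K x y by fastforce
  qed simp
qed

lemma bbil_summable:
  fixes \<Phi> :: "'s bid \<Rightarrow> 's bid \<Rightarrow> complex"
  assumes \<Phi>: "\<Phi> \<in> bbil" and x: "\<And>i. x i \<in> bidual" and y: "\<And>i. y i \<in> bidual"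
    and s: "summable (\<lambda>i. bnorm (x i) * bnorm (y i))"
  shows "summable (\<lambda>i. norm (\<Phi> (x i) (y i)))"
proof -
  obtain K where K: "K \<ge> 0" "\<forall>x\<in>bidual. \<forall>y\<in>bidual. cmod (\<Phi> x y) \<le> K * bnorm x * bnorm y"
    using bbil_bound[OF \<Phi>] by blast
  show ?thesis
    apply (rule summable_comparison_test[where g="\<lambda>i. K * (bnorm (x i) * bnorm (y i))"])
    using K x y s by (auto intro!: summable_mult simp: mult.assoc)
qed

lemma ptensor_val:
  fixes u :: "('s bid \<Rightarrow> 's bid \<Rightarrow> complex) \<Rightarrow> complex"
  assumes "u \<in> ptensor"
  obtains x y where "\<And>i. x i \<in> bidual" "\<And>i. y i \<in> bidual"
    "summable (\<lambda>i. bnorm (x i) * bnorm (y i))"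
    "\<And>\<Phi>. \<Phi> \<in> bbil \<Longrightarrow> u \<Phi> = (\<Sum>i. \<Phi> (x i) (y i))"
    "\<And>\<Phi>. \<Phi> \<in> bbil \<Longrightarrow> summable (\<lambda>i. \<Phi> (x i) (y i))"
proof -
  obtain x y where xy: "\<And>i. x i \<in> bidual" "\<And>i. y i \<in> bidual"
    "summable (\<lambda>i. bnorm (x i) * bnorm (y i))"
    "u = (\<lambda>\<Phi>. if \<Phi> \<in> bbil then (\<Sum>i. \<Phi> (x i) (y i)) else 0)"
    using ptensorE[OF assms] by blast
  show ?thesis
  proof (rule that[OF xy(1,2,3)])
    fix \<Phi> :: "'s bid \<Rightarrow> 's bid \<Rightarrow> complex" assume p: "\<Phi> \<in> bbil"
    show "u \<Phi> = (\<Sum>i. \<Phi> (x i) (y i))" using xy(4) p by simp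
    show "summable (\<lambda>i. \<Phi> (x i) (y i))"
      by (rule summable_norm_cancel[OF bbil_summable[OF p xy(1,2,3)]])
  qed
qed

lemma ptensor_cong:
  fixes u :: "('s bid \<Rightarrow> 's bid \<Rightarrow> complex) \<Rightarrow> complex"
  assumes u: "u \<in> ptensor" and \<Phi>: "\<Phi> \<in> bbil" and e: "\<forall>x\<in>bidual. \<forall>y\<in>bidual. \<Psi> x y = \<Phi> x y"
  shows "u \<Psi> = u \<Phi>"
proof -
  have \<Psi>: "\<Psi> \<in> bbil" by (rule bbil_cong[OF \<Phi> e])
  obtain x y where xy0: "\<And>i. x i \<in> bidual" "\<And>i. y i \<in> bidual"
    "summable (\<lambda>i. bnorm (x i) * bnorm (y i))"
    "\<And>\<Phi>. \<Phi> \<in> bbil \<Longrightarrow> u \<Phi> = (\<Sum>i. \<Phi> (x i) (y i))"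
    "\<And>\<Phi>. \<Phi> \<in> bbil \<Longrightarrow> summable (\<lambda>i. \<Phi> (x i) (y i))" using ptensor_val[OF u] by blast
  note xy = xy0(1,2,4)
  have "u \<Psi> = (\<Sum>i. \<Psi> (x i) (y i))" by (rule xy(3)[OF \<Psi>])
  also have "\<dots> = (\<Sum>i. \<Phi> (x i) (y i))" using e xy(1,2) by (intro arg_cong[where f=suminf] ext) blast
  also have "\<dots> = u \<Phi>" by (rule xy(3)[OF \<Phi>, symmetric])
  finally show ?thesis .
qed

lemma ptensor_add:
  fixes u :: "('s bid \<Rightarrow> 's bid \<Rightarrow> complex) \<Rightarrow> complex"
  assumes u: "u \<in> ptensor" and \<Phi>: "\<Phi> \<in> bbil" and \<Psi>: "\<Psi> \<in> bbil" and \<Theta>: "\<Theta> \<in> bbil"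
    and e: "\<forall>x\<in>bidual. \<forall>y\<in>bidual. \<Theta> x y = \<Phi> x y + \<Psi> x y"
  shows "u \<Theta> = u \<Phi> + u \<Psi>"
proof -
  obtain x y where xy0: "\<And>i. x i \<in> bidual" "\<And>i. y i \<in> bidual"
    "summable (\<lambda>i. bnorm (x i) * bnorm (y i))"
    "\<And>\<Phi>. \<Phi> \<in> bbil \<Longrightarrow> u \<Phi> = (\<Sum>i. \<Phi> (x i) (y i))"
    "\<And>\<Phi>. \<Phi> \<in> bbil \<Longrightarrow> summable (\<lambda>i. \<Phi> (x i) (y i))" using ptensor_val[OF u] by blast
  note xy = xy0(1,2,4,5)
  have "u \<Theta> = (\<Sum>i. \<Theta> (x i) (y i))" by (rule xy(3)[OF \<Theta>])
  also have "\<dots> = (\<Sum>i. \<Phi> (x i) (y i) + \<Psi> (x i) (y i))" using e xy(1,2) by (intro arg_cong[where f=suminf] ext) blast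
  also have "\<dots> = (\<Sum>i. \<Phi> (x i) (y i)) + (\<Sum>i. \<Psi> (x i) (y i))"
    by (rule suminf_add[OF xy(4)[OF \<Phi>] xy(4)[OF \<Psi>], symmetric])
  finally show ?thesis using xy(3)[OF \<Phi>] xy(3)[OF \<Psi>] by simp
qed

lemma ptensor_scale:
  fixes u :: "('s bid \<Rightarrow> 's bid \<Rightarrow> complex) \<Rightarrow> complex"
  assumes u: "u \<in> ptensor" and \<Phi>: "\<Phi> \<in> bbil" and \<Theta>: "\<Theta> \<in> bbil"
    and e: "\<forall>x\<in>bidual. \<forall>y\<in>bidual. \<Theta> x y = c * \<Phi> x y"
  shows "u \<Theta> = c * u \<Phi>"
proof -
  obtain x y where xy0: "\<And>i. x i \<in> bidual" "\<And>i. y i \<in> bidual"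
    "summable (\<lambda>i. bnorm (x i) * bnorm (y i))"
    "\<And>\<Phi>. \<Phi> \<in> bbil \<Longrightarrow> u \<Phi> = (\<Sum>i. \<Phi> (x i) (y i))"
    "\<And>\<Phi>. \<Phi> \<in> bbil \<Longrightarrow> summable (\<lambda>i. \<Phi> (x i) (y i))" using ptensor_val[OF u] by blast
  note xy = xy0(1,2,4,5)
  have "u \<Theta> = (\<Sum>i. \<Theta> (x i) (y i))" by (rule xy(3)[OF \<Theta>])
  also have "\<dots> = (\<Sum>i. c * \<Phi> (x i) (y i))" using e xy(1,2) by (intro arg_cong[where f=suminf] ext) blast
  also have "\<dots> = c * (\<Sum>i. \<Phi> (x i) (y i))"
    by (rule suminf_mult[OF xy(4)[OF \<Phi>]])
  finally show ?thesis using xy(3)[OF \<Phi>] by simp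
qed

lemma ptensor_bound:
  fixes u :: "('s bid \<Rightarrow> 's bid \<Rightarrow> complex) \<Rightarrow> complex"
  assumes u: "u \<in> ptensor"
  shows "\<exists>B. \<forall>\<Phi>\<in>bbil. \<forall>C. (\<forall>x\<in>bidual. \<forall>y\<in>bidual. cmod (\<Phi> x y) \<le> C * bnorm x * bnorm y) \<longrightarrow> cmod (u \<Phi>) \<le> C * B"
proof -
  obtain x y where xy0: "\<And>i. x i \<in> bidual" "\<And>i. y i \<in> bidual"
    "summable (\<lambda>i. bnorm (x i) * bnorm (y i))"
    "\<And>\<Phi>. \<Phi> \<in> bbil \<Longrightarrow> u \<Phi> = (\<Sum>i. \<Phi> (x i) (y i))"
    "\<And>\<Phi>. \<Phi> \<in> bbil \<Longrightarrow> summable (\<lambda>i. \<Phi> (x i) (y i))" using ptensor_val[OF u] by blast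
  note xy = xy0(1,2,3,4)
  show ?thesis
  proof (intro exI[of _ "\<Sum>i. bnorm (x i) * bnorm (y i)"] ballI allI impI)
    fix \<Phi> :: "'s bid \<Rightarrow> 's bid \<Rightarrow> complex" and C assume \<Phi>: "\<Phi> \<in> bbil"
      and b: "\<forall>x\<in>bidual. \<forall>y\<in>bidual. cmod (\<Phi> x y) \<le> C * bnorm x * bnorm y"
    have sn: "summable (\<lambda>i. norm (\<Phi> (x i) (y i)))" by (rule bbil_summable[OF \<Phi> xy(1,2,3)])
    have "cmod (u \<Phi>) = norm (\<Sum>i. \<Phi> (x i) (y i))" using xy(4)[OF \<Phi>] by simp
    also have "\<dots> \<le> (\<Sum>i. norm (\<Phi> (x i) (y i)))" by (rule summable_norm[OF sn])
    also have "\<dots> \<le> (\<Sum>i. C * (bnorm (x i) * bnorm (y i)))"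
    proof (rule suminf_le[OF _ sn summable_mult[OF xy(3)]])
      fix i show "norm (\<Phi> (x i) (y i)) \<le> C * (bnorm (x i) * bnorm (y i))"
        using b xy(1,2) by (simp add: mult.assoc)
    qed
    also have "\<dots> = C * (\<Sum>i. bnorm (x i) * bnorm (y i))" using xy(3) by (simp add: suminf_mult)
    finally show "cmod (u \<Phi>) \<le> C * (\<Sum>i. bnorm (x i) * bnorm (y i))" .
  qed
qed

definition rb :: "('s \<Rightarrow> real) set" where "rb = {g. \<exists>K. \<forall>s. \<bar>g s\<bar> \<le> K}"

lemma rbI: "(\<And>s. \<bar>g s\<bar> \<le> K) \<Longrightarrow> g \<in> rb" unfolding rb_def by blast
lemma rbE: "g \<in> rb \<Longrightarrow> (\<And>K. (\<And>s. \<bar>g s\<bar> \<le> K) \<Longrightarrow> P) \<Longrightarrow> P" unfolding rb_def by blast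

lemma rb_add: assumes "g \<in> rb" "h \<in> rb" shows "(\<lambda>s. g s + h s) \<in> rb"
proof -
  obtain K L where K: "\<And>s. \<bar>g s\<bar> \<le> K" and L: "\<And>s. \<bar>h s\<bar> \<le> L" using assms unfolding rb_def by blast
  show ?thesis proof (rule rbI[of _ "K + L"]) fix s show "\<bar>g s + h s\<bar> \<le> K + L" using K[of s] L[of s] by (auto simp: abs_le_iff min_def) qed
qed
lemma rb_diff: assumes "g \<in> rb" "h \<in> rb" shows "(\<lambda>s. g s - h s) \<in> rb"
proof -
  obtain K L where K: "\<And>s. \<bar>g s\<bar> \<le> K" and L: "\<And>s. \<bar>h s\<bar> \<le> L" using assms unfolding rb_def by blast
  show ?thesis proof (rule rbI[of _ "K + L"]) fix s show "\<bar>g s - h s\<bar> \<le> K + L" using K[of s] L[of s] by (auto simp: abs_le_iff min_def) qed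
qed
lemma rb_min: assumes "g \<in> rb" "h \<in> rb" shows "(\<lambda>s. min (g s) (h s)) \<in> rb"
proof -
  obtain K L where K: "\<And>s. \<bar>g s\<bar> \<le> K" and L: "\<And>s. \<bar>h s\<bar> \<le> L" using assms unfolding rb_def by blast
  show ?thesis proof (rule rbI[of _ "K + L"]) fix s show "\<bar>min (g s) (h s)\<bar> \<le> K + L" using K[of s] L[of s] by (auto simp: abs_le_iff min_def) qed
qed
lemma rb_scale: assumes "g \<in> rb" shows "(\<lambda>s. c * g s) \<in> rb"
proof -
  obtain K where K: "\<And>s. \<bar>g s\<bar> \<le> K" using assms unfolding rb_def by blast
  show ?thesis by (rule rbI[of _ "\<bar>c\<bar> * K"]) (simp add: abs_mult K mult_left_mono)
qed
lemma rb_comp: assumes "g \<in> rb" shows "(\<lambda>t. g (\<sigma> t)) \<in> rb"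
proof -
  obtain K where K: "\<And>s. \<bar>g s\<bar> \<le> K" using assms unfolding rb_def by blast
  show ?thesis by (rule rbI[of _ K]) (rule K)
qed
lemma rb_max: assumes "g \<in> rb" shows "(\<lambda>s. max (g s) 0) \<in> rb"
proof -
  obtain K where K: "\<And>s. \<bar>g s\<bar> \<le> K" using assms unfolding rb_def by blast
  show ?thesis proof (rule rbI[of _ K]) fix s show "\<bar>max (g s) 0\<bar> \<le> K" using K[of s] by (auto simp: abs_le_iff max_def) qed
qed
lemma rb_maxm: assumes "g \<in> rb" shows "(\<lambda>s. max (- g s) 0) \<in> rb"
proof -
  obtain K where K: "\<And>s. \<bar>g s\<bar> \<le> K" using assms unfolding rb_def by blast
  show ?thesis proof (rule rbI[of _ K]) fix s show "\<bar>max (- g s) 0\<bar> \<le> K" using K[of s] by (auto simp: abs_le_iff max_def) qed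
qed
lemma rb_const: "(\<lambda>s. c) \<in> rb" by (rule rbI[of _ "\<bar>c\<bar>"]) simp
lemma rb_Re: "f \<in> linf \<Longrightarrow> (\<lambda>s. Re (f s)) \<in> rb"
  by (rule rbI[of _ "supnorm f"]) (meson abs_Re_le_cmod linf_le order_trans)
lemma rb_Im: "f \<in> linf \<Longrightarrow> (\<lambda>s. Im (f s)) \<in> rb"
  by (rule rbI[of _ "supnorm f"]) (meson abs_Im_le_cmod linf_le order_trans)
lemma rb_linf: "g \<in> rb \<Longrightarrow> (\<lambda>s. complex_of_real (g s)) \<in> linf"
  by (elim rbE) (rule linfI, simp)

locale meanc =
  fixes n :: "'s bid" and sig :: "('s \<Rightarrow> 's) set"
  assumes n: "n \<in> bidual" and n1: "n augm = 1"
    and ninv: "\<And>\<sigma> f. \<sigma> \<in> sig \<Longrightarrow> f \<in> linf \<Longrightarrow> n (\<lambda>t. f (\<sigma> t)) = n f"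
begin

definition rn :: "('s \<Rightarrow> real) \<Rightarrow> real" where
  "rn g = Re (n (\<lambda>s. complex_of_real (g s)))"

lemma rn_add: "g \<in> rb \<Longrightarrow> h \<in> rb \<Longrightarrow> rn (\<lambda>s. g s + h s) = rn g + rn h"
  unfolding rn_def using bidual_add[OF n rb_linf rb_linf, of g h] by simp

lemma rn_scale: "g \<in> rb \<Longrightarrow> rn (\<lambda>s. c * g s) = c * rn g"
  unfolding rn_def using bidual_scale[OF n rb_linf, of g "complex_of_real c"] by simp

lemma rn_zero: "rn (\<lambda>s. 0) = 0"
  unfolding rn_def using bidual_zero[OF n] by simp

lemma rn_inv: "\<sigma> \<in> sig \<Longrightarrow> g \<in> rb \<Longrightarrow> rn (\<lambda>t. g (\<sigma> t)) = rn g"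
  unfolding rn_def using ninv[OF _ rb_linf, of \<sigma> g] by simp

lemma rn_bound: "\<exists>K\<ge>0. \<forall>g C. (\<forall>s. \<bar>g s\<bar> \<le> C) \<longrightarrow> \<bar>rn g\<bar> \<le> K * C"
proof -
  obtain K where K: "K \<ge> 0" "\<forall>f\<in>linf. cmod (n f) \<le> K * supnorm f" using bidual_bound[OF n] by blast
  show ?thesis
  proof (intro exI[of _ K] conjI allI impI)
    fix g :: "'s \<Rightarrow> real" and C assume g: "\<forall>s. \<bar>g s\<bar> \<le> C"
    have l: "(\<lambda>s. complex_of_real (g s)) \<in> linf" using g by (intro rb_linf rbI) auto
    have "\<bar>rn g\<bar> \<le> cmod (n (\<lambda>s. complex_of_real (g s)))" unfolding rn_def by (rule abs_Re_le_cmod)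
    also have "\<dots> \<le> K * supnorm (\<lambda>s. complex_of_real (g s))" using K l by blast
    also have "\<dots> \<le> K * C" using g by (intro mult_left_mono supnorm_le K) auto
    finally show "\<bar>rn g\<bar> \<le> K * C" .
  qed (simp add: K)
qed

definition SS :: "('s \<Rightarrow> real) \<Rightarrow> ('s \<Rightarrow> real) set" where
  "SS f = {g. g \<in> rb \<and> (\<forall>s. 0 \<le> g s \<and> g s \<le> f s)}"

definition Q :: "('s \<Rightarrow> real) \<Rightarrow> real" where
  "Q f = Sup (rn ` SS f)"

definition nb :: "('s \<Rightarrow> real) \<Rightarrow> bool" where
  "nb f \<longleftrightarrow> f \<in> rb \<and> (\<forall>s. 0 \<le> f s)"

lemma SS_zero: "nb f \<Longrightarrow> (\<lambda>s. 0) \<in> SS f"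
  unfolding SS_def nb_def by (auto intro: rb_const)

lemma Q_bdd: "nb f \<Longrightarrow> bdd_above (rn ` SS f)"
proof -
  assume f: "nb f"
  then obtain C where C: "\<And>s. \<bar>f s\<bar> \<le> C" unfolding nb_def rb_def by blast
  obtain K where K: "K \<ge> 0" "\<forall>g C. (\<forall>s. \<bar>g s\<bar> \<le> C) \<longrightarrow> \<bar>rn g\<bar> \<le> K * C" using rn_bound by blast
  show ?thesis
  proof (rule bdd_aboveI2)
    fix g assume g: "g \<in> SS f"
    have "\<forall>s. \<bar>g s\<bar> \<le> C" using g C unfolding SS_def by (smt (verit) mem_Collect_eq)
    then have "\<bar>rn g\<bar> \<le> K * C" using K(2) by blast
    then show "rn g \<le> K * C" by simp
  qed
qed

lemma Q_upper: "nb f \<Longrightarrow> g \<in> SS f \<Longrightarrow> rn g \<le> Q f"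
  unfolding Q_def by (rule cSup_upper) (auto intro: Q_bdd)

lemma Q_least: "nb f \<Longrightarrow> (\<And>g. g \<in> SS f \<Longrightarrow> rn g \<le> M) \<Longrightarrow> Q f \<le> M"
  unfolding Q_def by (rule cSup_least) (auto dest: SS_zero)

lemma Q_nonneg: "nb f \<Longrightarrow> 0 \<le> Q f"
  using Q_upper[OF _ SS_zero] rn_zero by force

lemma nb_add: "nb f \<Longrightarrow> nb g \<Longrightarrow> nb (\<lambda>s. f s + g s)"
  unfolding nb_def by (auto intro: rb_add)

lemma Q_mono: assumes f: "nb f" and f': "nb f'" and le: "\<And>s. f s \<le> f' s" shows "Q f \<le> Q f'"
proof (rule Q_least[OF f])
  fix g assume "g \<in> SS f"
  then have "g \<in> SS f'" unfolding SS_def using le by (auto intro: order_trans)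
  then show "rn g \<le> Q f'" by (rule Q_upper[OF f'])
qed

lemma Q_add: assumes f: "nb f" and f': "nb f'" shows "Q (\<lambda>s. f s + f' s) = Q f + Q f'"
proof (rule antisym)
  show "Q (\<lambda>s. f s + f' s) \<le> Q f + Q f'"
  proof (rule Q_least[OF nb_add[OF f f']])
    fix g assume g: "g \<in> SS (\<lambda>s. f s + f' s)"
    define g1 where "g1 = (\<lambda>s. min (g s) (f s))"
    define g2 where "g2 = (\<lambda>s. g s - g1 s)"
    have rg: "g \<in> rb" using g unfolding SS_def by simp
    have g1: "g1 \<in> SS f" using g f unfolding SS_def g1_def nb_def by (auto intro: rb_min)
    have gs: "\<And>s. 0 \<le> g s \<and> g s \<le> f s + f' s" using g unfolding SS_def by blast
    have f's: "\<And>s. 0 \<le> f' s" using f' unfolding nb_def by blast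
    have "\<And>s. 0 \<le> g2 s \<and> g2 s \<le> f' s"
    proof -
      fix s show "0 \<le> g2 s \<and> g2 s \<le> f' s" using gs[of s] f's[of s] unfolding g2_def g1_def by (auto simp: min_def)
    qed
    moreover have "g2 \<in> rb" unfolding g2_def g1_def using rg f unfolding nb_def by (intro rb_diff rb_min) auto
    ultimately have g2: "g2 \<in> SS f'" unfolding SS_def by blast
    have e: "g = (\<lambda>s. g1 s + g2 s)" unfolding g2_def by simp
    have "rn g = rn g1 + rn g2" unfolding e
      by (rule rn_add) (use g1 g2 in \<open>auto simp: SS_def\<close>)
    also have "\<dots> \<le> Q f + Q f'" by (intro add_mono Q_upper f f' g1 g2)
    finally show "rn g \<le> Q f + Q f'" .
  qed
next
  have "\<And>g'. g' \<in> SS f' \<Longrightarrow> Q f \<le> Q (\<lambda>s. f s + f' s) - rn g'"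
  proof -
    fix g' assume g': "g' \<in> SS f'"
    show "Q f \<le> Q (\<lambda>s. f s + f' s) - rn g'"
    proof (rule Q_least[OF f])
      fix g assume g: "g \<in> SS f"
      have "(\<lambda>s. g s + g' s) \<in> SS (\<lambda>s. f s + f' s)" using g g' unfolding SS_def
        by (auto intro: rb_add add_mono)
      then have "rn (\<lambda>s. g s + g' s) \<le> Q (\<lambda>s. f s + f' s)" by (rule Q_upper[OF nb_add[OF f f']])
      moreover have "rn (\<lambda>s. g s + g' s) = rn g + rn g'" using g g' unfolding SS_def by (auto intro: rn_add)
      ultimately show "rn g \<le> Q (\<lambda>s. f s + f' s) - rn g'" by simp
    qed
  qed
  then have "\<And>g'. g' \<in> SS f' \<Longrightarrow> rn g' \<le> Q (\<lambda>s. f s + f' s) - Q f" by force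
  then have "Q f' \<le> Q (\<lambda>s. f s + f' s) - Q f" by (rule Q_least[OF f'])
  then show "Q f + Q f' \<le> Q (\<lambda>s. f s + f' s)" by simp
qed

lemma Q_zero: "Q (\<lambda>s. 0) = 0"
proof -
  have nb0: "nb (\<lambda>s. 0)" unfolding nb_def by (auto intro: rb_const)
  have "Q (\<lambda>s. 0) \<le> 0"
  proof (rule Q_least[OF nb0])
    fix g assume "g \<in> SS (\<lambda>s. 0)"
    then have "g = (\<lambda>s. 0)" unfolding SS_def by (auto intro: antisym)
    then show "rn g \<le> 0" using rn_zero by simp
  qed
  then show ?thesis using Q_nonneg[OF nb0] by simp
qed

lemma nb_scale: "nb f \<Longrightarrow> 0 \<le> c \<Longrightarrow> nb (\<lambda>s. c * f s)"
  unfolding nb_def by (auto intro: rb_scale)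

lemma Q_scale_pos: assumes f: "nb f" and c: "0 < c" shows "Q (\<lambda>s. c * f s) = c * Q f"
proof (rule antisym)
  show "Q (\<lambda>s. c * f s) \<le> c * Q f"
  proof (rule Q_least[OF nb_scale[OF f]])
    fix g assume g: "g \<in> SS (\<lambda>s. c * f s)"
    have g': "(\<lambda>s. (1/c) * g s) \<in> SS f" using g c rb_scale[of g "1/c"] unfolding SS_def
      by (auto simp: field_simps)
    have "rn (\<lambda>s. (1/c) * g s) = (1/c) * rn g" using g unfolding SS_def by (intro rn_scale) simp
    then have "rn g = c * rn (\<lambda>s. (1/c) * g s)" using c by simp
    also have "\<dots> \<le> c * Q f" using Q_upper[OF f g'] c by simp
    finally show "rn g \<le> c * Q f" .
  qed (use c in simp)
next
  have "Q f \<le> Q (\<lambda>s. c * f s) / c"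
  proof (rule Q_least[OF f])
    fix g assume g: "g \<in> SS f"
    have g': "(\<lambda>s. c * g s) \<in> SS (\<lambda>s. c * f s)" using g c unfolding SS_def
      by (auto intro: rb_scale)
    have "c * rn g \<le> Q (\<lambda>s. c * f s)"
      using Q_upper[OF nb_scale[OF f] g'] c g unfolding SS_def by (simp add: rn_scale)
    then show "rn g \<le> Q (\<lambda>s. c * f s) / c" using c by (simp add: field_simps)
  qed
  then show "c * Q f \<le> Q (\<lambda>s. c * f s)" using c by (simp add: field_simps)
qed

lemma Q_scale: assumes f: "nb f" and c: "0 \<le> c" shows "Q (\<lambda>s. c * f s) = c * Q f"
  using Q_scale_pos[OF f] Q_zero c by (cases "c = 0") auto

lemma nb_comp: "nb f \<Longrightarrow> nb (\<lambda>t. f (\<sigma> t))"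
  unfolding nb_def by (auto intro: rb_comp)

lemma Q_inv_ge: assumes f: "nb f" and s: "\<sigma> \<in> sig" shows "Q f \<le> Q (\<lambda>t. f (\<sigma> t))"
proof (rule Q_least[OF f])
  fix g assume g: "g \<in> SS f"
  have "(\<lambda>t. g (\<sigma> t)) \<in> SS (\<lambda>t. f (\<sigma> t))" using g unfolding SS_def by (auto intro: rb_comp)
  then have "rn (\<lambda>t. g (\<sigma> t)) \<le> Q (\<lambda>t. f (\<sigma> t))" by (rule Q_upper[OF nb_comp[OF f]])
  then show "rn g \<le> Q (\<lambda>t. f (\<sigma> t))" using rn_inv[OF s] g unfolding SS_def by simp
qed

lemma Q_inv: assumes f: "nb f" and s: "\<sigma> \<in> sig" shows "Q (\<lambda>t. f (\<sigma> t)) = Q f"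
proof -
  obtain C where C: "\<And>s. \<bar>f s\<bar> \<le> C" using f unfolding nb_def rb_def by blast
  define f' where "f' = (\<lambda>s. C - f s)"
  have f': "nb f'" using f C unfolding nb_def f'_def by (auto intro: rb_diff rb_const simp: abs_le_iff)
  have e1: "(\<lambda>s. C) = (\<lambda>s. f s + f' s)" unfolding f'_def by simp
  have e2: "(\<lambda>s. C) = (\<lambda>t. f (\<sigma> t) + f' (\<sigma> t))" unfolding f'_def by simp
  have "Q f + Q f' = Q (\<lambda>t. f (\<sigma> t)) + Q (\<lambda>t. f' (\<sigma> t))"
    using Q_add[OF f f'] Q_add[OF nb_comp[OF f] nb_comp[OF f']] e1 e2 by metis
  moreover have "Q f \<le> Q (\<lambda>t. f (\<sigma> t))" by (rule Q_inv_ge[OF f s])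
  moreover have "Q f' \<le> Q (\<lambda>t. f' (\<sigma> t))" by (rule Q_inv_ge[OF f' s])
  ultimately show ?thesis by linarith
qed

definition R :: "('s \<Rightarrow> real) \<Rightarrow> real" where
  "R h = Q (\<lambda>s. max (h s) 0) - Q (\<lambda>s. max (- h s) 0)"

lemma nb_pos: "h \<in> rb \<Longrightarrow> nb (\<lambda>s. max (h s) 0)" unfolding nb_def by (auto intro: rb_max)
lemma nb_neg: "h \<in> rb \<Longrightarrow> nb (\<lambda>s. max (- h s) 0)" unfolding nb_def by (auto intro: rb_maxm)

lemma R_diff: assumes a: "nb a" and b: "nb b" shows "R (\<lambda>s. a s - b s) = Q a - Q b"
proof -
  have h: "(\<lambda>s. a s - b s) \<in> rb" using a b unfolding nb_def by (auto intro: rb_diff)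
  have "(\<lambda>s. max (a s - b s) 0 + b s) = (\<lambda>s. a s + max (- (a s - b s)) 0)" by (auto simp: max_def)
  then have "Q (\<lambda>s. max (a s - b s) 0) + Q b = Q a + Q (\<lambda>s. max (- (a s - b s)) 0)"
    using Q_add[OF nb_pos[OF h] b] Q_add[OF a nb_neg[OF h]] by simp
  then show ?thesis unfolding R_def by simp
qed

lemma R_split: "h \<in> rb \<Longrightarrow> h = (\<lambda>s. max (h s) 0 - max (- h s) 0)"
  by (auto simp: max_def)

lemma R_add: assumes h: "h \<in> rb" and k: "k \<in> rb" shows "R (\<lambda>s. h s + k s) = R h + R k"
proof -
  have "(\<lambda>s. h s + k s) = (\<lambda>s. (max (h s) 0 + max (k s) 0) - (max (- h s) 0 + max (- k s) 0))"
    by (auto simp: max_def)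
  then have "R (\<lambda>s. h s + k s) = Q (\<lambda>s. max (h s) 0 + max (k s) 0) - Q (\<lambda>s. max (- h s) 0 + max (- k s) 0)"
    using R_diff[OF nb_add[OF nb_pos[OF h] nb_pos[OF k]] nb_add[OF nb_neg[OF h] nb_neg[OF k]]] by simp
  then show ?thesis
    unfolding R_def Q_add[OF nb_pos[OF h] nb_pos[OF k]] Q_add[OF nb_neg[OF h] nb_neg[OF k]] by simp
qed

lemma R_scale: assumes h: "h \<in> rb" shows "R (\<lambda>s. c * h s) = c * R h"
proof (cases "c \<ge> 0")
  case True
  have "(\<lambda>s. c * h s) = (\<lambda>s. c * max (h s) 0 - c * max (- h s) 0)"
    by (auto simp: max_def algebra_simps)
  then have "R (\<lambda>s. c * h s) = Q (\<lambda>s. c * max (h s) 0) - Q (\<lambda>s. c * max (- h s) 0)"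
    using R_diff[OF nb_scale[OF nb_pos[OF h] True] nb_scale[OF nb_neg[OF h] True]] by simp
  then show ?thesis unfolding R_def Q_scale[OF nb_pos[OF h] True] Q_scale[OF nb_neg[OF h] True]
    by (simp add: algebra_simps)
next
  case False
  then have c: "0 \<le> - c" by simp
  have "(\<lambda>s. c * h s) = (\<lambda>s. (- c) * max (- h s) 0 - (- c) * max (h s) 0)"
    by (auto simp: max_def algebra_simps)
  then have "R (\<lambda>s. c * h s) = Q (\<lambda>s. (- c) * max (- h s) 0) - Q (\<lambda>s. (- c) * max (h s) 0)"
    using R_diff[OF nb_scale[OF nb_neg[OF h] c] nb_scale[OF nb_pos[OF h] c]] by simp
  then show ?thesis unfolding R_def Q_scale[OF nb_pos[OF h] c] Q_scale[OF nb_neg[OF h] c]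
    by (simp add: algebra_simps)
qed

lemma R_inv: "h \<in> rb \<Longrightarrow> \<sigma> \<in> sig \<Longrightarrow> R (\<lambda>t. h (\<sigma> t)) = R h"
  unfolding R_def using Q_inv[OF nb_pos] Q_inv[OF nb_neg] by simp

lemma Q1: "1 \<le> Q (\<lambda>s. 1)"
proof -
  have nb1: "nb (\<lambda>s. 1)" unfolding nb_def by (auto intro: rb_const)
  have "(\<lambda>s. 1) \<in> SS (\<lambda>s. 1)" unfolding SS_def by (auto intro: rb_const)
  then have "rn (\<lambda>s. 1) \<le> Q (\<lambda>s. 1)" by (rule Q_upper[OF nb1])
  moreover have "rn (\<lambda>s. 1) = 1" unfolding rn_def using n1 unfolding augm_def by simp
  ultimately show ?thesis by simp
qed

lemma R_le: assumes h: "h \<in> rb" and C: "\<And>s. h s \<le> C" "0 \<le> C" shows "R h \<le> C * Q (\<lambda>s. 1)"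
proof -
  have nb1: "nb (\<lambda>s. 1)" unfolding nb_def by (auto intro: rb_const)
  have "R h \<le> Q (\<lambda>s. max (h s) 0)" unfolding R_def using Q_nonneg[OF nb_neg[OF h]] by simp
  also have "\<dots> \<le> Q (\<lambda>s. C * 1)"
    by (rule Q_mono[OF nb_pos[OF h]]) (use C in \<open>auto simp: nb_def intro: rb_const\<close>)
  also have "\<dots> = C * Q (\<lambda>s. 1)" by (rule Q_scale[OF nb1 C(2)])
  finally show ?thesis .
qed

lemma R_one: "R (\<lambda>s. 1) = Q (\<lambda>s. 1)" unfolding R_def using Q_zero by simp
lemma R_zero: "R (\<lambda>s. 0) = 0" unfolding R_def using Q_zero by simp

definition M :: "'s linf \<Rightarrow> complex" where
  "M f = Complex (R (\<lambda>s. Re (f s))) (R (\<lambda>s. Im (f s)))"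

lemma M_add: "f \<in> linf \<Longrightarrow> g \<in> linf \<Longrightarrow> M (\<lambda>s. f s + g s) = M f + M g"
  unfolding M_def using R_add[OF rb_Re rb_Re, of f g] R_add[OF rb_Im rb_Im, of f g]
  by (simp add: complex_eq_iff)

lemma M_scale: assumes f: "f \<in> linf" shows "M (\<lambda>s. c * f s) = c * M f"
proof -
  have "R (\<lambda>s. Re (c * f s)) = R (\<lambda>s. Re c * Re (f s) + (- Im c) * Im (f s))" by simp
  also have "\<dots> = R (\<lambda>s. Re c * Re (f s)) + R (\<lambda>s. (- Im c) * Im (f s))"
    by (rule R_add[OF rb_scale[OF rb_Re[OF f]] rb_scale[OF rb_Im[OF f]]])
  also have "\<dots> = Re c * R (\<lambda>s. Re (f s)) + (- Im c) * R (\<lambda>s. Im (f s))"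
    by (simp only: R_scale[OF rb_Re[OF f]] R_scale[OF rb_Im[OF f]])
  finally have a: "R (\<lambda>s. Re (c * f s)) = Re c * R (\<lambda>s. Re (f s)) - Im c * R (\<lambda>s. Im (f s))" by simp
  have "R (\<lambda>s. Im (c * f s)) = R (\<lambda>s. Re c * Im (f s) + Im c * Re (f s))" by simp
  also have "\<dots> = R (\<lambda>s. Re c * Im (f s)) + R (\<lambda>s. Im c * Re (f s))"
    by (rule R_add[OF rb_scale[OF rb_Im[OF f]] rb_scale[OF rb_Re[OF f]]])
  also have "\<dots> = Re c * R (\<lambda>s. Im (f s)) + Im c * R (\<lambda>s. Re (f s))"
    by (simp only: R_scale[OF rb_Re[OF f]] R_scale[OF rb_Im[OF f]])
  finally have b: "R (\<lambda>s. Im (c * f s)) = Re c * R (\<lambda>s. Im (f s)) + Im c * R (\<lambda>s. Re (f s))" .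
  show ?thesis unfolding M_def a b by (simp add: complex_eq_iff)
qed

lemma M_inv: "f \<in> linf \<Longrightarrow> \<sigma> \<in> sig \<Longrightarrow> M (\<lambda>t. f (\<sigma> t)) = M f"
  unfolding M_def using R_inv[OF rb_Re] R_inv[OF rb_Im] by simp

lemma M_bound: assumes f: "f \<in> linf" shows "cmod (M f) \<le> supnorm f * Q (\<lambda>s. 1)"
proof (cases "M f = 0")
  case True then show ?thesis using supnorm_nonneg[OF f] Q1 by simp
next
  case False
  define z where "z = M f"
  define w where "w = cnj z / complex_of_real (cmod z)"
  have z0: "cmod z > 0" using False z_def by simp
  have w1: "cmod w = 1" unfolding w_def using z0 by (simp add: norm_divide)
  have "M (\<lambda>s. w * f s) = w * z" using M_scale[OF f] z_def by simp
  also have "\<dots> = complex_of_real (cmod z)" unfolding w_def using z0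
    by (simp add: complex_norm_square[symmetric] power2_eq_square field_simps)
  finally have "cmod z = Re (M (\<lambda>s. w * f s))" by simp
  also have "\<dots> = R (\<lambda>s. Re (w * f s))" unfolding M_def by simp
  also have "\<dots> \<le> supnorm f * Q (\<lambda>s. 1)"
  proof (rule R_le[OF rb_Re[OF linf_scale[OF f]] _ supnorm_nonneg[OF f]])
    fix s
    have "Re (w * f s) \<le> cmod (w * f s)" by (rule complex_Re_le_cmod)
    also have "\<dots> = cmod (f s)" using w1 by (simp add: norm_mult)
    also have "\<dots> \<le> supnorm f" by (rule linf_le[OF f])
    finally show "Re (w * f s) \<le> supnorm f" .
  qed
  finally show ?thesis unfolding z_def .
qed

definition mm :: "'s bid" where
  "mm f = (if f \<in> linf then M f / complex_of_real (Q (\<lambda>s. 1)) else 0)"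

lemma mm_bidual: "mm \<in> bidual"
  unfolding bidual_def
proof (intro CollectI conjI ballI allI impI exI[of _ 1])
  fix f g :: "'s linf" assume f: "f \<in> linf" and g: "g \<in> linf"
  show "mm (\<lambda>s. f s + g s) = mm f + mm g"
    unfolding mm_def using f g linf_add[OF f g] M_add[OF f g] by (simp add: add_divide_distrib)
next
  fix c and f :: "'s linf" assume f: "f \<in> linf"
  show "mm (\<lambda>s. c * f s) = c * mm f"
    unfolding mm_def using f linf_scale[OF f] M_scale[OF f] by simp
next
  fix f :: "'s linf" assume f: "f \<in> linf"
  have q: "Q (\<lambda>s. 1) > 0" using Q1 by simp
  have "cmod (mm f) = cmod (M f) / Q (\<lambda>s. 1)" unfolding mm_def using f q by (simp add: norm_divide)
  also have "\<dots> \<le> supnorm f" using M_bound[OF f] q by (simp add: divide_le_eq)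
  finally show "cmod (mm f) \<le> 1 * supnorm f" by simp
next
  fix f :: "'s linf" assume "f \<notin> linf" then show "mm f = 0" unfolding mm_def by simp
qed

lemma mm_augm: "mm augm = 1"
proof -
  have "M augm = complex_of_real (Q (\<lambda>s. 1))"
    unfolding M_def augm_def using R_one R_zero by (simp add: complex_eq_iff)
  then show ?thesis unfolding mm_def using augm_linf Q1 by simp
qed

lemma mm_bnorm: "bnorm mm = 1"
proof (rule antisym)
  have q: "Q (\<lambda>s. 1) > 0" using Q1 by simp
  show "bnorm mm \<le> 1" unfolding bnorm_def
  proof (rule cSUP_least)
    have "augm \<in> {f \<in> (linf::'s linf set). supnorm f \<le> 1}" by (simp add: augm_linf supnorm_augm)
    then show "{f \<in> (linf::'s linf set). supnorm f \<le> 1} \<noteq> {}" by blast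
    fix f :: "'s linf" assume f: "f \<in> {f \<in> linf. supnorm f \<le> 1}"
    have "cmod (mm f) = cmod (M f) / Q (\<lambda>s. 1)" unfolding mm_def using f q by (simp add: norm_divide)
    also have "\<dots> \<le> supnorm f" using M_bound[of f] f q by (simp add: divide_le_eq)
    finally show "cmod (mm f) \<le> 1" using f by simp
  qed
  obtain K where K: "\<forall>f\<in>linf. cmod (mm f) \<le> K * supnorm f" using bidual_bound[OF mm_bidual] by blast
  have "cmod (mm augm) \<le> bnorm mm" by (rule bnorm_ge[OF K augm_linf]) (simp add: supnorm_augm)
  then show "1 \<le> bnorm mm" using mm_augm by simp
qed

lemma mm_inv: "\<sigma> \<in> sig \<Longrightarrow> f \<in> linf \<Longrightarrow> mm (\<lambda>t. f (\<sigma> t)) = mm f"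
  unfolding mm_def using M_inv linf_comp by metis

end

lemma mean_exists:
  fixes n :: "'s bid"
  assumes "n \<in> bidual" "n augm = 1" "\<forall>\<sigma>\<in>sig. \<forall>f\<in>linf. n (\<lambda>t. f (\<sigma> t)) = n f"
  shows "\<exists>m. m \<in> bidual \<and> bnorm m = 1 \<and> m augm = 1 \<and> (\<forall>\<sigma>\<in>sig. \<forall>f\<in>linf. m (\<lambda>t. f (\<sigma> t)) = m f)"
proof -
  interpret meanc n sig using assms by unfold_locales auto
  show ?thesis using mm_bidual mm_bnorm mm_augm mm_inv by blast
qed

definition PhiL :: "'s linf \<Rightarrow> 's bid \<Rightarrow> 's bid \<Rightarrow> complex" where
  "PhiL f = (\<lambda>x y. x f * y augm)"
definition PhiR :: "'s linf \<Rightarrow> 's bid \<Rightarrow> 's bid \<Rightarrow> complex" where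
  "PhiR f = (\<lambda>x y. x augm * y f)"

lemma PhiL_bbil: "f \<in> linf \<Longrightarrow> PhiL f \<in> bbil"
  unfolding PhiL_def by (rule prod_bbil[OF _ augm_linf])
lemma PhiR_bbil: "f \<in> linf \<Longrightarrow> PhiR f \<in> bbil"
  unfolding PhiR_def by (rule prod_bbil[OF augm_linf])

lemma arens_dhat_left:
  fixes f :: "('s::semigroup_mult) linf"
  assumes x: "x \<in> bidual" and f: "f \<in> linf"
  shows "arens (dhat s) x f = x (\<lambda>t. f (s*t))"
  unfolding arens_def dhat_def using f arens_inner(1)[OF x f] by simp

lemma arens_dhat_right:
  fixes f :: "('s::semigroup_mult) linf"
  assumes f: "f \<in> linf"
  shows "arens y (dhat s) f = y (\<lambda>t. f (t*s))"
proof -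
  have "\<And>s'. (\<lambda>t. f (s' * t)) \<in> linf" by (rule linf_comp[OF f])
  then show ?thesis unfolding arens_def dhat_def using f by simp
qed

lemma augm_compR: "(\<lambda>t. augm (t * s)) = augm" unfolding augm_def by simp
lemma augm_compL: "(\<lambda>t. augm (s * t)) = augm" unfolding augm_def by simp

lemma PhiL_bound: "f \<in> linf \<Longrightarrow> x \<in> bidual \<Longrightarrow> y \<in> bidual \<Longrightarrow> cmod (PhiL f x y) \<le> supnorm f * bnorm x * bnorm y"
  unfolding PhiL_def using prod_bound[OF _ augm_linf, of f x y] by (simp add: supnorm_augm)
lemma PhiR_bound: "f \<in> linf \<Longrightarrow> x \<in> bidual \<Longrightarrow> y \<in> bidual \<Longrightarrow> cmod (PhiR f x y) \<le> supnorm f * bnorm x * bnorm y"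
  unfolding PhiR_def using prod_bound[OF augm_linf, of f x y] by (simp add: supnorm_augm algebra_simps)

type_synonym 's tens = "('s bid \<Rightarrow> 's bid \<Rightarrow> complex) \<Rightarrow> complex"

definition nL :: "('s::semigroup_mult) tens \<Rightarrow> 's bid" where
  "nL u f = (if f \<in> linf then u (PhiL f) else 0)"
definition nR :: "('s::semigroup_mult) tens \<Rightarrow> 's bid" where
  "nR u f = (if f \<in> linf then u (PhiR f) else 0)"

lemma nX_bidual:
  fixes u :: "('s::semigroup_mult) tens" and P :: "'s linf \<Rightarrow> 's bid \<Rightarrow> 's bid \<Rightarrow> complex"
  assumes u: "u \<in> ptensor"
    and Pb: "\<And>f. f \<in> linf \<Longrightarrow> P f \<in> bbil"
    and Padd: "\<And>f g x y. f \<in> linf \<Longrightarrow> g \<in> linf \<Longrightarrow> x \<in> bidual \<Longrightarrow> y \<in> bidual \<Longrightarrow> P (\<lambda>s. f s + g s) x y = P f x y + P g x y"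
    and Pscale: "\<And>f c x y. f \<in> linf \<Longrightarrow> x \<in> bidual \<Longrightarrow> y \<in> bidual \<Longrightarrow> P (\<lambda>s. c * f s) x y = c * P f x y"
    and Pbound: "\<And>f x y. f \<in> linf \<Longrightarrow> x \<in> bidual \<Longrightarrow> y \<in> bidual \<Longrightarrow> cmod (P f x y) \<le> supnorm f * bnorm x * bnorm y"
  shows "(\<lambda>f. if f \<in> linf then u (P f) else 0) \<in> bidual"
proof -
  obtain B where B: "\<forall>\<Phi>\<in>bbil. \<forall>C. (\<forall>x\<in>bidual. \<forall>y\<in>bidual. cmod (\<Phi> x y) \<le> C * bnorm x * bnorm y) \<longrightarrow> cmod (u \<Phi>) \<le> C * B"
    using ptensor_bound[OF u] by blast
  show ?thesis unfolding bidual_def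
  proof (intro CollectI conjI ballI allI impI exI[of _ B])
    fix f g :: "'s linf" assume f: "f \<in> linf" and g: "g \<in> linf"
    show "(if (\<lambda>s. f s + g s) \<in> linf then u (P (\<lambda>s. f s + g s)) else 0) =
          (if f \<in> linf then u (P f) else 0) + (if g \<in> linf then u (P g) else 0)"
      using f g linf_add[OF f g] ptensor_add[OF u Pb[OF f] Pb[OF g] Pb[OF linf_add[OF f g]]] Padd
      by simp
  next
    fix c and f :: "'s linf" assume f: "f \<in> linf"
    show "(if (\<lambda>s. c * f s) \<in> linf then u (P (\<lambda>s. c * f s)) else 0) = c * (if f \<in> linf then u (P f) else 0)"
      using f linf_scale[OF f] ptensor_scale[OF u Pb[OF f] Pb[OF linf_scale[OF f]]] Pscale
      by simp
  next
    fix f :: "'s linf" assume f: "f \<in> linf"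
    have "cmod (u (P f)) \<le> supnorm f * B" using B Pb[OF f] Pbound[OF f] by blast
    then show "cmod (if f \<in> linf then u (P f) else 0) \<le> B * supnorm f" using f by (simp add: mult.commute)
  next
    fix f :: "'s linf" assume "f \<notin> linf" then show "(if f \<in> linf then u (P f) else 0) = 0" by simp
  qed
qed

lemma nL_bidual: "u \<in> ptensor \<Longrightarrow> nL u \<in> bidual"
proof -
  assume u: "u \<in> ptensor"
  have "(\<lambda>f. if f \<in> linf then u (PhiL f) else 0) \<in> bidual"
    by (rule nX_bidual[OF u PhiL_bbil _ _ PhiL_bound])
      (auto simp: PhiL_def bidual_add bidual_scale algebra_simps)
  then show ?thesis unfolding nL_def[abs_def] .
qed

lemma nR_bidual: "u \<in> ptensor \<Longrightarrow> nR u \<in> bidual"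
proof -
  assume u: "u \<in> ptensor"
  have "(\<lambda>f. if f \<in> linf then u (PhiR f) else 0) \<in> bidual"
    by (rule nX_bidual[OF u PhiR_bbil _ _ PhiR_bound])
      (auto simp: PhiR_def bidual_add bidual_scale algebra_simps)
  then show ?thesis unfolding nR_def[abs_def] .
qed

lemma nL_inv:
  fixes u :: "('s::semigroup_mult) tens"
  assumes u: "u \<in> ptensor" and c: "\<forall>a\<in>bidual. tlmod a u = trmod u a" and f: "f \<in> linf"
  shows "nL u (\<lambda>t. f (s*t)) = nL u f"
proof -
  have fs: "(\<lambda>t. f (s*t)) \<in> linf" by (rule linf_comp[OF f])
  have c1: "tlmod (dhat s) u (PhiL f) = trmod u (dhat s) (PhiL f)" using bspec[OF c dhat_bidual[of s]] by (rule fun_cong)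
  have "tlmod (dhat s) u (PhiL f) = u (\<lambda>x y. PhiL f (arens (dhat s) x) y)"
    unfolding tlmod_def by (rule if_P[OF PhiL_bbil[OF f]])
  also have "\<dots> = u (PhiL (\<lambda>t. f (s*t)))"
  proof (rule ptensor_cong[OF u PhiL_bbil[OF fs]], intro ballI)
    fix x y :: "'s bid" assume x: "x \<in> bidual" and y: "y \<in> bidual"
    show "PhiL f (arens (dhat s) x) y = PhiL (\<lambda>t. f (s*t)) x y"
      by (simp only: PhiL_def arens_dhat_left[OF x f])
  qed
  finally have a: "tlmod (dhat s) u (PhiL f) = u (PhiL (\<lambda>t. f (s*t)))" .
  have "trmod u (dhat s) (PhiL f) = u (\<lambda>x y. PhiL f x (arens y (dhat s)))"
    unfolding trmod_def by (rule if_P[OF PhiL_bbil[OF f]])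
  also have "\<dots> = u (PhiL f)"
  proof (rule ptensor_cong[OF u PhiL_bbil[OF f]], intro ballI)
    fix x y :: "'s bid" assume x: "x \<in> bidual" and y: "y \<in> bidual"
    show "PhiL f x (arens y (dhat s)) = PhiL f x y"
      by (simp only: PhiL_def arens_dhat_right[OF augm_linf] augm_compR)
  qed
  finally have b: "trmod u (dhat s) (PhiL f) = u (PhiL f)" .
  have "nL u (\<lambda>t. f (s*t)) = u (PhiL (\<lambda>t. f (s*t)))" unfolding nL_def by (rule if_P[OF fs])
  also have "\<dots> = u (PhiL f)" using a b c1 by simp
  also have "\<dots> = nL u f" unfolding nL_def by (rule if_P[OF f, symmetric])
  finally show ?thesis .
qed

lemma nR_inv:
  fixes u :: "('s::semigroup_mult) tens"
  assumes u: "u \<in> ptensor" and c: "\<forall>a\<in>bidual. tlmod a u = trmod u a" and f: "f \<in> linf"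
  shows "nR u (\<lambda>t. f (t*s)) = nR u f"
proof -
  have fs: "(\<lambda>t. f (t*s)) \<in> linf" by (rule linf_comp[OF f])
  have c1: "tlmod (dhat s) u (PhiR f) = trmod u (dhat s) (PhiR f)" using bspec[OF c dhat_bidual[of s]] by (rule fun_cong)
  have "trmod u (dhat s) (PhiR f) = u (\<lambda>x y. PhiR f x (arens y (dhat s)))"
    unfolding trmod_def by (rule if_P[OF PhiR_bbil[OF f]])
  also have "\<dots> = u (PhiR (\<lambda>t. f (t*s)))"
  proof (rule ptensor_cong[OF u PhiR_bbil[OF fs]], intro ballI)
    fix x y :: "'s bid" assume x: "x \<in> bidual" and y: "y \<in> bidual"
    show "PhiR f x (arens y (dhat s)) = PhiR (\<lambda>t. f (t*s)) x y"
      by (simp only: PhiR_def arens_dhat_right[OF f])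
  qed
  finally have a: "trmod u (dhat s) (PhiR f) = u (PhiR (\<lambda>t. f (t*s)))" .
  have "tlmod (dhat s) u (PhiR f) = u (\<lambda>x y. PhiR f (arens (dhat s) x) y)"
    unfolding tlmod_def by (rule if_P[OF PhiR_bbil[OF f]])
  also have "\<dots> = u (PhiR f)"
  proof (rule ptensor_cong[OF u PhiR_bbil[OF f]], intro ballI)
    fix x y :: "'s bid" assume x: "x \<in> bidual" and y: "y \<in> bidual"
    show "PhiR f (arens (dhat s) x) y = PhiR f x y"
      by (simp only: PhiR_def arens_dhat_left[OF x augm_linf] augm_compL)
  qed
  finally have b: "tlmod (dhat s) u (PhiR f) = u (PhiR f)" .
  have "nR u (\<lambda>t. f (t*s)) = u (PhiR (\<lambda>t. f (t*s)))" unfolding nR_def by (rule if_P[OF fs])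
  also have "\<dots> = u (PhiR f)" using a b c1 by simp
  also have "\<dots> = nR u f" unfolding nR_def by (rule if_P[OF f, symmetric])
  finally show ?thesis .
qed

lemma tpi_augm:
  fixes u :: "('s::semigroup_mult) tens"
  assumes u: "u \<in> ptensor"
  shows "tpi u augm = nL u augm" "tpi u augm = nR u augm"
proof -
  have e: "\<forall>x\<in>(bidual::'s bid set). \<forall>y\<in>bidual. arens x y augm = PhiL augm x y"
  proof (intro ballI)
    fix x y :: "'s bid" assume x: "x \<in> bidual" and y: "y \<in> bidual"
    have e1: "(\<lambda>s. y augm * augm s) = (\<lambda>s. y augm)" by (simp add: augm_def)
    have "arens x y augm = x (\<lambda>s. y augm * augm s)"
      unfolding arens_def if_P[OF augm_linf] augm_compL e1 by (rule refl)
    also have "\<dots> = y augm * x augm" by (rule bidual_scale[OF x augm_linf])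
    finally show "arens x y augm = PhiL augm x y" unfolding PhiL_def by simp
  qed
  have "tpi u augm = u (\<lambda>x y. arens x y augm)" unfolding tpi_def by (rule if_P[OF augm_linf])
  also have "\<dots> = u (PhiL augm)" by (rule ptensor_cong[OF u PhiL_bbil[OF augm_linf] e])
  finally have t: "tpi u augm = u (PhiL augm)" .
  have "nL u augm = u (PhiL augm)" unfolding nL_def by (rule if_P[OF augm_linf])
  moreover have "nR u augm = u (PhiL augm)" unfolding nR_def PhiR_def PhiL_def by (rule if_P[OF augm_linf])
  ultimately show "tpi u augm = nL u augm" "tpi u augm = nR u augm" using t by simp_all
qed

lemma tpi_bound:
  fixes u :: "('s::semigroup_mult) tens"
  assumes u: "u \<in> ptensor"
  shows "\<exists>B\<ge>0. \<forall>g\<in>linf. cmod (tpi u g) \<le> B * supnorm g"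
proof -
  obtain B where B: "\<forall>\<Phi>\<in>bbil. \<forall>C. (\<forall>x\<in>bidual. \<forall>y\<in>bidual. cmod (\<Phi> x y) \<le> C * bnorm x * bnorm y) \<longrightarrow> cmod (u \<Phi>) \<le> C * B"
    using ptensor_bound[OF u] by blast
  show ?thesis
  proof (intro exI[of _ "max B 0"] conjI ballI)
    fix g :: "'s linf" assume g: "g \<in> linf"
    have "\<forall>x\<in>bidual. \<forall>y\<in>bidual. cmod (arens x y g) \<le> supnorm g * bnorm x * bnorm y"
      using arens_bound[OF g] by blast
    then have "cmod (u (\<lambda>x y. arens x y g)) \<le> supnorm g * B"
      by (rule mp[OF spec[OF bspec[OF B arens_bbil[OF g]]]])
    also have "\<dots> \<le> supnorm g * max B 0" by (rule mult_left_mono) (auto simp: supnorm_nonneg g)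
    finally show "cmod (tpi u g) \<le> max B 0 * supnorm g" unfolding tpi_def using g by (simp add: mult.commute)
  qed simp
qed

lemma left_from_n:
  fixes n :: "('s::semigroup_mult) bid"
  assumes n: "n \<in> bidual" "n augm = 1" and inv: "\<And>s f. f \<in> linf \<Longrightarrow> n (\<lambda>t. f (s*t)) = n f"
  shows "left_amenable TYPE('s)"
proof -
  have "\<forall>\<sigma>\<in>range (\<lambda>s t. s*t). \<forall>f\<in>linf. n (\<lambda>t. f (\<sigma> t)) = n f"
  proof (intro ballI)
    fix \<sigma> :: "'s \<Rightarrow> 's" and f :: "'s linf" assume "\<sigma> \<in> range (\<lambda>s t. s*t)" and f: "f \<in> linf"
    then obtain s where "\<sigma> = (\<lambda>t. s*t)" by blast
    then show "n (\<lambda>t. f (\<sigma> t)) = n f" using inv[OF f] by simp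
  qed
  then obtain m :: "'s bid" where m: "m \<in> bidual" "bnorm m = 1" "m augm = 1"
    "\<forall>\<sigma>\<in>range (\<lambda>s t. s*t). \<forall>f\<in>linf. m (\<lambda>t. f (\<sigma> t)) = m f"
    using mean_exists[OF n] by blast
  have "\<And>s. arens (dhat s) m = m"
  proof
    fix s and f :: "'s linf"
    show "arens (dhat s) m f = m f"
    proof (cases "f \<in> linf")
      case True
      have si: "(\<lambda>t. s*t) \<in> range (\<lambda>s t. s*t)" by blast
      have "m (\<lambda>t. f ((\<lambda>t. s*t) t)) = m f" by (rule bspec[OF bspec[OF m(4) si] True])
      then show ?thesis using arens_dhat_left[OF m(1) True] by simp
    next
      case False
      then show ?thesis unfolding arens_def using bidual_out[OF m(1) False] by simp
    qed
  qed
  then show ?thesis unfolding left_amenable_def using m by blast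
qed

lemma right_from_n:
  fixes n :: "('s::semigroup_mult) bid"
  assumes n: "n \<in> bidual" "n augm = 1" and inv: "\<And>s f. f \<in> linf \<Longrightarrow> n (\<lambda>t. f (t*s)) = n f"
  shows "right_amenable TYPE('s)"
proof -
  have "\<forall>\<sigma>\<in>range (\<lambda>s t. t*s). \<forall>f\<in>linf. n (\<lambda>t. f (\<sigma> t)) = n f"
  proof (intro ballI)
    fix \<sigma> :: "'s \<Rightarrow> 's" and f :: "'s linf" assume "\<sigma> \<in> range (\<lambda>s t. t*s)" and f: "f \<in> linf"
    then obtain s where "\<sigma> = (\<lambda>t. t*s)" by blast
    then show "n (\<lambda>t. f (\<sigma> t)) = n f" using inv[OF f] by simp
  qed
  then obtain m :: "'s bid" where m: "m \<in> bidual" "bnorm m = 1" "m augm = 1"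
    "\<forall>\<sigma>\<in>range (\<lambda>s t. t*s). \<forall>f\<in>linf. m (\<lambda>t. f (\<sigma> t)) = m f"
    using mean_exists[OF n] by blast
  have "\<And>s. arens m (dhat s) = m"
  proof
    fix s and f :: "'s linf"
    show "arens m (dhat s) f = m f"
    proof (cases "f \<in> linf")
      case True
      have si: "(\<lambda>t. t*s) \<in> range (\<lambda>s t. t*s)" by blast
      have "m (\<lambda>t. f ((\<lambda>t. t*s) t)) = m f" by (rule bspec[OF bspec[OF m(4) si] True])
      then show ?thesis using arens_dhat_right[OF True] by simp
    next
      case False
      then show ?thesis unfolding arens_def using bidual_out[OF m(1) False] by simp
    qed
  qed
  then show ?thesis unfolding right_amenable_def using m by blast
qed

theorem mainTheorem2:
  assumes "bidual_pseudo_contractible TYPE('s::semigroup_mult)"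
  shows "amenable_sg TYPE('s)"
proof -
  have "\<exists>F :: ('s tens) filter. F \<noteq> bot \<and>
       (\<forall>\<^sub>F m in F. m \<in> ptensor \<and> (\<forall>a\<in>bidual. tlmod a m = trmod m a)) \<and>
       (\<forall>a\<in>bidual. ((\<lambda>m. bnorm (\<lambda>f. arens (tpi m) a f - a f)) \<longlongrightarrow> 0) F)"
    using assms unfolding bidual_pseudo_contractible_def .
  then obtain F :: "('s tens) filter" where Fall: "F \<noteq> bot \<and>
       (\<forall>\<^sub>F m in F. m \<in> ptensor \<and> (\<forall>a\<in>bidual. tlmod a m = trmod m a)) \<and>
       (\<forall>a\<in>bidual. ((\<lambda>m. bnorm (\<lambda>f. arens (tpi m) a f - a f)) \<longlongrightarrow> 0) F)"
    by (rule exE)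
  have F: "F \<noteq> bot" using Fall by (rule conjunct1)
  have ev: "\<forall>\<^sub>F m in F. m \<in> ptensor \<and> (\<forall>a\<in>bidual. tlmod a m = trmod m a)"
    using Fall by (rule conjunct1[OF conjunct2])
  have lim: "\<forall>a\<in>bidual. ((\<lambda>m. bnorm (\<lambda>f. arens (tpi m) a f - a f)) \<longlongrightarrow> 0) F"
    using Fall by (rule conjunct2[OF conjunct2])
  define s0 :: 's where "s0 = undefined"
  define a where "a = dhat s0"
  have "((\<lambda>m. bnorm (\<lambda>f. arens (tpi m) a f - a f)) \<longlongrightarrow> 0) F"
    unfolding a_def by (rule bspec[OF lim dhat_bidual])
  then have ev2: "\<forall>\<^sub>F m in F. dist (bnorm (\<lambda>f. arens (tpi m) a f - a f)) 0 < 1/2"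
    by (rule tendstoD) simp
  have "\<exists>u. (u \<in> ptensor \<and> (\<forall>a\<in>bidual. tlmod a u = trmod u a)) \<and>
      dist (bnorm (\<lambda>f. arens (tpi u) a f - a f)) 0 < 1/2"
    by (rule eventually_happens'[OF F eventually_conj[OF ev ev2]])
  then obtain u where uall: "(u \<in> ptensor \<and> (\<forall>a\<in>bidual. tlmod a u = trmod u a)) \<and>
      dist (bnorm (\<lambda>f. arens (tpi u) a f - a f)) 0 < 1/2" by (rule exE)
  have u: "u \<in> ptensor" "\<forall>a\<in>bidual. tlmod a u = trmod u a" using uall by simp_all
  have small: "dist (bnorm (\<lambda>f. arens (tpi u) a f - a f)) 0 < 1/2" using uall by (rule conjunct2)
  define c where "c = tpi u augm"
  have c0: "c \<noteq> 0"
  proof -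
    obtain B where B: "B \<ge> 0" "\<forall>g\<in>linf. cmod (tpi u g) \<le> B * supnorm g" using tpi_bound[OF u(1)] by blast
    define D where "D = (\<lambda>f. arens (tpi u) a f - a f)"
    have Db: "\<forall>f\<in>linf. cmod (D f) \<le> (B + 1) * supnorm f"
    proof
      fix f :: "'s linf" assume f: "f \<in> linf"
      have "D f = tpi u (\<lambda>t. f (t*s0)) - f s0"
        unfolding D_def a_def arens_dhat_right[OF f] by (simp add: dhat_def f)
      also have "cmod \<dots> \<le> cmod (tpi u (\<lambda>t. f (t*s0))) + cmod (f s0)" by (rule norm_triangle_ineq4)
      also have "\<dots> \<le> B * supnorm f + supnorm f"
      proof (rule add_mono)
        have "cmod (tpi u (\<lambda>t. f (t*s0))) \<le> B * supnorm (\<lambda>t. f (t*s0))" by (rule bspec[OF B(2) linf_comp[OF f]])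
        also have "\<dots> \<le> B * supnorm f" by (rule mult_left_mono[OF supnorm_comp[OF f] B(1)])
        finally show "cmod (tpi u (\<lambda>t. f (t*s0))) \<le> B * supnorm f" .
        show "cmod (f s0) \<le> supnorm f" by (rule linf_le[OF f])
      qed
      finally show "cmod (D f) \<le> (B + 1) * supnorm f" by (simp add: algebra_simps)
    qed
    have "cmod (D augm) \<le> bnorm D" by (rule bnorm_ge[OF Db augm_linf]) (simp add: supnorm_augm)
    moreover have "D augm = c - 1"
    proof -
      have e1: "arens (tpi u) a augm = tpi u augm"
        unfolding a_def arens_dhat_right[OF augm_linf] augm_compR by (rule refl)
      have e2: "a augm = 1" unfolding a_def dhat_def if_P[OF augm_linf] by (simp add: augm_def)
      show ?thesis unfolding D_def c_def e1 e2 by (rule refl)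
    qed
    moreover have "bnorm D < 1/2" using small unfolding D_def by simp
    ultimately have "cmod (c - 1) < 1/2" by simp
    then show ?thesis by auto
  qed
  have nLb: "bscale (1/c) (nL u) \<in> bidual" by (rule bscale_bidual[OF nL_bidual[OF u(1)]])
  have nRb: "bscale (1/c) (nR u) \<in> bidual" by (rule bscale_bidual[OF nR_bidual[OF u(1)]])
  have "left_amenable TYPE('s)"
  proof (rule left_from_n[OF nLb])
    show "bscale (1/c) (nL u) augm = 1" unfolding bscale_def using tpi_augm(1)[OF u(1)] c0 c_def by simp
    fix s and f :: "'s linf" assume f: "f \<in> linf"
    show "bscale (1/c) (nL u) (\<lambda>t. f (s*t)) = bscale (1/c) (nL u) f"
      unfolding bscale_def using nL_inv[OF u f] by simp
  qed
  moreover have "right_amenable TYPE('s)"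
  proof (rule right_from_n[OF nRb])
    show "bscale (1/c) (nR u) augm = 1" unfolding bscale_def using tpi_augm(2)[OF u(1)] c0 c_def by simp
    fix s and f :: "'s linf" assume f: "f \<in> linf"
    show "bscale (1/c) (nR u) (\<lambda>t. f (t*s)) = bscale (1/c) (nR u) f"
      unfolding bscale_def using nR_inv[OF u f] by simp
  qed
  ultimately show ?thesis unfolding amenable_sg_def by blast
qed

end
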